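(* The class of data languages accepted by SAFA is closed under concatenation: for any SAFA $M_1,M_2$ over $\Sigma\times D$, there is a SAFA $M$ with $L(M)=\{uv: u\in L(M_1),\ v\in L(M_2)\}$.
   Context: $D$ is a fixed countably infinite set of data values; for a finite alphabet $\Sigma$, data words are elements of $(\Sigma\times D)^*$. A set augmented finite automaton (SAFA) is a tuple $M=(Q,\Sigma\times D,q_0,F,H,\delta)$: $Q$ finite set of states, $q_0\in Q$ initial, $F\subseteq Q$ final, $H=\{h_1,\dots,h_m\}$ a finite collection of (names of) sets of data values, $\delta\subseteq Q\times\Sigma\times C\times OP\times Q$ with $C=\{p(h_i),\,!p(h_i): h_i\in H\}$, $OP=\{-\}\cup\{\mathsf{ins}(h_i):h_i\in H\}$. Configurations are $(q,\langle S_1,\dots,S_m\rangle)$ with $S_i\subseteq D$ finite; initially state $q_0$ and all sets empty. On reading $(a,d)$, a transition $(q,a,\alpha,op,q')$ from the current state may be taken if $\alpha=p(h_i)$ and $d\in S_i$, or $\alpha=\,!p(h_i)$ and $d\notin S_i$; then the state becomes $q'$ and if $op=\mathsf{ins}(h_j)$ the value $d$ is added to $S_j$ ($op=-$ changes nothing). A word is accepted if some run reads it entirely and ends in $F$; $L(M)$ is the set of accepted words. *)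

theory Defs
  imports Main "HOL-Library.Countable"
begin

text \<open>The data domain D is a type 'd
  that is countable and infinite; the finite alphabet is a type 'a of class finite.
  The set names H = {h_0,...,h_(m-1)} are represented by indices i < m.\<close>

datatype safa_cond = Mem nat | NotMem nat
datatype safa_op = NoOp | Ins nat

record ('q, 'a) safa =
  sa_states :: "'q set"
  sa_init   :: 'q
  sa_final  :: "'q set"
  sa_nsets  :: nat
  sa_trans  :: "('q \<times> 'a \<times> safa_cond \<times> safa_op \<times> 'q) set"

fun cond_idx :: "safa_cond \<Rightarrow> nat" where
  "cond_idx (Mem i) = i" | "cond_idx (NotMem i) = i"

fun op_ok :: "nat \<Rightarrow> safa_op \<Rightarrow> bool" where
  "op_ok m NoOp = True" | "op_ok m (Ins j) = (j < m)"

definition wf_safa :: "('q, 'a) safa \<Rightarrow> bool" where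
  "wf_safa M \<longleftrightarrow> finite (sa_states M) \<and> sa_init M \<in> sa_states M
     \<and> sa_final M \<subseteq> sa_states M
     \<and> (\<forall>(q, a, c, o', q') \<in> sa_trans M. q \<in> sa_states M \<and> q' \<in> sa_states M
            \<and> cond_idx c < sa_nsets M \<and> op_ok (sa_nsets M) o')"

fun cond_holds :: "safa_cond \<Rightarrow> (nat \<Rightarrow> 'd set) \<Rightarrow> 'd \<Rightarrow> bool" where
  "cond_holds (Mem i) S d = (d \<in> S i)"
| "cond_holds (NotMem i) S d = (d \<notin> S i)"

fun apply_op :: "safa_op \<Rightarrow> 'd \<Rightarrow> (nat \<Rightarrow> 'd set) \<Rightarrow> (nat \<Rightarrow> 'd set)" where
  "apply_op NoOp d S = S"
| "apply_op (Ins j) d S = S(j := insert d (S j))"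

inductive safa_run :: "('q, 'a) safa \<Rightarrow> 'q \<Rightarrow> (nat \<Rightarrow> 'd set) \<Rightarrow> ('a \<times> 'd) list \<Rightarrow> 'q \<Rightarrow> bool"
  for M where
  nil: "safa_run M q S [] q"
| cons: "\<lbrakk> (q, a, c, o', q') \<in> sa_trans M; cond_holds c S d;
          safa_run M q' (apply_op o' d S) w q'' \<rbrakk>
         \<Longrightarrow> safa_run M q S ((a, d) # w) q''"

definition safa_lang :: "('q, 'a) safa \<Rightarrow> ('a \<times> 'd) list set" where
  "safa_lang M = {w. \<exists>q. safa_run M (sa_init M) (\<lambda>_. {}) w q \<and> q \<in> sa_final M}"

end

theory Submission
  imports Defs "HOL-Library.Countable_Set"
begin

fun shc :: "nat \<Rightarrow> safa_cond \<Rightarrow> safa_cond" where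
  "shc k (Mem i) = Mem (i+k)" | "shc k (NotMem i) = NotMem (i+k)"

fun shop :: "nat \<Rightarrow> safa_op \<Rightarrow> safa_op" where
  "shop k NoOp = NoOp" | "shop k (Ins j) = Ins (j+k)"

definition extS :: "nat \<Rightarrow> (nat \<Rightarrow> 'd set) \<Rightarrow> nat \<Rightarrow> 'd set" where
  "extS m S1 = (\<lambda>i. if i < m then S1 i else {})"

lemma cond_shift: "cond_holds (shc k c) S d = cond_holds c (\<lambda>i. S (i+k)) d"
  by (cases c) auto

lemma op_shift: "(\<lambda>i. apply_op (shop k opr) d S (i+k)) = apply_op opr d (\<lambda>i. S (i+k))"
  by (cases opr) (auto simp: fun_eq_iff)

lemma cond_ext: "cond_idx c < m \<Longrightarrow> cond_holds c (extS m S1) d = cond_holds c S1 d"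
  by (cases c) (auto simp: extS_def)

lemma op_ext: "op_ok m opr \<Longrightarrow> apply_op opr d (extS m S1) = extS m (apply_op opr d S1)"
  by (cases opr) (auto simp: extS_def fun_eq_iff)

lemma shift_ext: "(\<lambda>i. extS m S1 (i+m)) = (\<lambda>_. {})"
  by (auto simp: extS_def fun_eq_iff)

lemma ext_empty: "extS m (\<lambda>_. {}) = (\<lambda>_. {})"
  by (auto simp: extS_def fun_eq_iff)

definition cat :: "('q1,'a) safa \<Rightarrow> ('q2,'a) safa \<Rightarrow> ('q1+'q2,'a) safa" where
"cat M1 M2 = \<lparr>sa_states = Inl ` sa_states M1 \<union> Inr ` sa_states M2,
   sa_init = Inl (sa_init M1),
   sa_final = Inr ` sa_final M2 \<union> (if sa_init M2 \<in> sa_final M2 then Inl ` sa_final M1 else {}),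
   sa_nsets = sa_nsets M1 + sa_nsets M2,
   sa_trans = (\<lambda>(q,a,c,opr,q'). (Inl q, a, c, opr, Inl q')) ` sa_trans M1
     \<union> (\<lambda>(q,a,c,opr,q'). (Inr q, a, shc (sa_nsets M1) c, shop (sa_nsets M1) opr, Inr q')) ` sa_trans M2
     \<union> {(Inl f, a, shc (sa_nsets M1) c, shop (sa_nsets M1) opr, Inr q') | f a c opr q'.
          f \<in> sa_final M1 \<and> (sa_init M2, a, c, opr, q') \<in> sa_trans M2}\<rparr>"

lemma cat_simps:
  "sa_init (cat M1 M2) = Inl (sa_init M1)"
  "sa_final (cat M1 M2) = Inr ` sa_final M2 \<union> (if sa_init M2 \<in> sa_final M2 then Inl ` sa_final M1 else {})"
  "sa_nsets (cat M1 M2) = sa_nsets M1 + sa_nsets M2"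
  "sa_states (cat M1 M2) = Inl ` sa_states M1 \<union> Inr ` sa_states M2"
  by (simp_all add: cat_def)

lemma trans_cat: "(x, a, c, opr, y) \<in> sa_trans (cat M1 M2) \<longleftrightarrow>
   (\<exists>q q'. x = Inl q \<and> y = Inl q' \<and> (q,a,c,opr,q') \<in> sa_trans M1)
 \<or> (\<exists>q q' c0 o0. x = Inr q \<and> y = Inr q' \<and> c = shc (sa_nsets M1) c0 \<and> opr = shop (sa_nsets M1) o0
      \<and> (q,a,c0,o0,q') \<in> sa_trans M2)
 \<or> (\<exists>f q' c0 o0. x = Inl f \<and> y = Inr q' \<and> c = shc (sa_nsets M1) c0 \<and> opr = shop (sa_nsets M1) o0
      \<and> f \<in> sa_final M1 \<and> (sa_init M2,a,c0,o0,q') \<in> sa_trans M2)"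
  unfolding cat_def by (simp add: image_iff Bex_def) fastforce

lemma runA:
  "safa_run M2 q S2 w g \<Longrightarrow> (\<lambda>i. S (i + sa_nsets M1)) = S2
   \<Longrightarrow> safa_run (cat M1 M2) (Inr q) S w (Inr g)"
proof (induction arbitrary: S rule: safa_run.induct)
  case (nil q S)
  then show ?case by (simp add: safa_run.nil)
next
  case (cons q a c opr q' S2 d w q'')
  show ?case
  proof (rule safa_run.cons[where q'="Inr q'" and c="shc (sa_nsets M1) c" and o'="shop (sa_nsets M1) opr"])
    show "(Inr q, a, shc (sa_nsets M1) c, shop (sa_nsets M1) opr, Inr q') \<in> sa_trans (cat M1 M2)"
      using cons(1) unfolding trans_cat by blast
    show "cond_holds (shc (sa_nsets M1) c) S d" using cons cond_shift by metis
    show "safa_run (cat M1 M2) (Inr q') (apply_op (shop (sa_nsets M1) opr) d S) w (Inr q'')"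
      using cons.IH[OF op_shift[of "sa_nsets M1" opr d S, unfolded cons(5)]] by simp
  qed
qed

lemma runA':
  "safa_run (cat M1 M2) x S w p \<Longrightarrow> x = Inr q
   \<Longrightarrow> \<exists>g. p = Inr g \<and> safa_run M2 q (\<lambda>i. S (i + sa_nsets M1)) w g"
proof (induction arbitrary: q rule: safa_run.induct)
  case (nil q S)
  then show ?case by (auto intro: safa_run.nil)
next
  case (cons x a c opr y S d w p)
  from cons(1) cons(5) obtain q' c0 o0 where y: "y = Inr q'" and c: "c = shc (sa_nsets M1) c0"
    and o: "opr = shop (sa_nsets M1) o0" and tr: "(q,a,c0,o0,q') \<in> sa_trans M2"
    unfolding trans_cat by blast
  from cons.IH[OF y] obtain g where g: "p = Inr g"
    and r: "safa_run M2 q' (\<lambda>i. apply_op opr d S (i + sa_nsets M1)) w g" by blast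
  have "safa_run M2 q (\<lambda>i. S (i + sa_nsets M1)) ((a,d)#w) g"
    apply (rule safa_run.cons[OF tr])
    using cons(2) c cond_shift apply metis
    using r o op_shift by metis
  then show ?case using g by blast
qed

lemma runC:
  assumes "f \<in> sa_final M1" "safa_run M2 (sa_init M2) (\<lambda>_. {}) ((a,d)#v) g"
    "(\<lambda>i. S (i + sa_nsets M1)) = (\<lambda>_. {})"
  shows "safa_run (cat M1 M2) (Inl f) S ((a,d)#v) (Inr g)"
  using assms(2)
proof cases
  case (cons c opr q')
  show ?thesis
  proof (rule safa_run.cons[where q'="Inr q'" and c="shc (sa_nsets M1) c" and o'="shop (sa_nsets M1) opr"])
    show "(Inl f, a, shc (sa_nsets M1) c, shop (sa_nsets M1) opr, Inr q') \<in> sa_trans (cat M1 M2)"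
      using cons(1) assms(1) unfolding trans_cat by blast
    show "cond_holds (shc (sa_nsets M1) c) S d" using cons assms(3) cond_shift by metis
    show "safa_run (cat M1 M2) (Inr q') (apply_op (shop (sa_nsets M1) opr) d S) v (Inr g)"
      using runA[OF cons(3)] op_shift[of _ _ _ S] assms(3) by metis
  qed
qed

lemma runB:
  "safa_run M1 q S1 u q' \<Longrightarrow> wf_safa M1
   \<Longrightarrow> (\<And>S. (\<lambda>i. S (i + sa_nsets M1)) = (\<lambda>_. {}) \<Longrightarrow> safa_run (cat M1 M2) (Inl q') S v p)
   \<Longrightarrow> safa_run (cat M1 M2) (Inl q) (extS (sa_nsets M1) S1) (u @ v) p"
proof (induction rule: safa_run.induct)
  case (nil q S)
  then show ?case using shift_ext by auto
next
  case (cons q a c opr q' S d w q'')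
  have wf: "cond_idx c < sa_nsets M1" "op_ok (sa_nsets M1) opr"
    using cons(1,5) unfolding wf_safa_def by auto
  show ?case
    apply simp
    apply (rule safa_run.cons[where q'="Inl q'"])
    using cons(1) unfolding trans_cat apply blast
    apply (simp add: cond_ext[OF wf(1)] cons(2))
    using cons.IH[OF cons(5,6)] by (simp add: op_ext[OF wf(2)])
qed

lemma runD:
  "safa_run (cat M1 M2) x S w p \<Longrightarrow> wf_safa M1 \<Longrightarrow> x = Inl q \<Longrightarrow> S = extS (sa_nsets M1) S1 \<Longrightarrow>
    (\<exists>q'. p = Inl q' \<and> safa_run M1 q S1 w q') \<or>
    (\<exists>u v f g. w = u @ v \<and> safa_run M1 q S1 u f \<and> f \<in> sa_final M1 \<and> p = Inr g
        \<and> safa_run M2 (sa_init M2) (\<lambda>_. {}) v g)"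
proof (induction arbitrary: q S1 rule: safa_run.induct)
  case (nil q S)
  then show ?case by (auto intro: safa_run.nil)
next
  case (cons x a c opr y S d w p)
  from cons(1) cons(6) consider
    (A) q' where "y = Inl q'" "(q,a,c,opr,q') \<in> sa_trans M1"
  | (B) q' c0 o0 where "y = Inr q'" "c = shc (sa_nsets M1) c0" "opr = shop (sa_nsets M1) o0"
      "q \<in> sa_final M1" "(sa_init M2,a,c0,o0,q') \<in> sa_trans M2"
    unfolding trans_cat by blast
  then show ?case
  proof cases
    case A
    have wf: "cond_idx c < sa_nsets M1" "op_ok (sa_nsets M1) opr"
      using A(2) cons(5) unfolding wf_safa_def by auto
    have ch: "cond_holds c S1 d" using cons(2) unfolding cons(7) cond_ext[OF wf(1)] .
    have "apply_op opr d S = extS (sa_nsets M1) (apply_op opr d S1)"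
      using cons(7) op_ext[OF wf(2)] by simp
    from cons.IH[OF cons(5) A(1) this] show ?thesis
    proof
      assume "\<exists>q''. p = Inl q'' \<and> safa_run M1 q' (apply_op opr d S1) w q''"
      then show ?thesis using safa_run.cons[OF A(2) ch] by blast
    next
      assume "\<exists>u v f g. w = u @ v \<and> safa_run M1 q' (apply_op opr d S1) u f \<and> f \<in> sa_final M1 \<and> p = Inr g
        \<and> safa_run M2 (sa_init M2) (\<lambda>_. {}) v g"
      then obtain u v f g where "w = u @ v" "safa_run M1 q' (apply_op opr d S1) u f" "f \<in> sa_final M1" "p = Inr g"
        "safa_run M2 (sa_init M2) (\<lambda>_. {}) v g" by blast
      then show ?thesis using safa_run.cons[OF A(2) ch]
        by (metis append_Cons)
    qed
  next
    case B
    from runA'[OF cons(3) B(1)] obtain g where g: "p = Inr g"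
      and r: "safa_run M2 q' (\<lambda>i. apply_op opr d S (i + sa_nsets M1)) w g" by blast
    have sh: "(\<lambda>i. S (i + sa_nsets M1)) = (\<lambda>_. {})" using cons(7) shift_ext by metis
    have "safa_run M2 (sa_init M2) (\<lambda>_. {}) ((a,d)#w) g"
      apply (rule safa_run.cons[OF B(5)])
      using cons(2) B(2) cond_shift sh apply metis
      using r B(3) op_shift sh by metis
    then show ?thesis using g B(4) safa_run.nil by (metis append_Nil)
  qed
qed

lemma cat_lang:
  assumes "wf_safa M1"
  shows "safa_lang (cat M1 M2) = {u @ v | u v. u \<in> (safa_lang M1 :: ('a \<times> 'd) list set) \<and> v \<in> safa_lang M2}"
proof (intro set_eqI iffI)
  fix w :: "('a \<times> 'd) list"
  assume "w \<in> safa_lang (cat M1 M2)"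
  then obtain p where r: "safa_run (cat M1 M2) (Inl (sa_init M1)) (\<lambda>_. {}) w p"
    and p: "p \<in> sa_final (cat M1 M2)"
    unfolding safa_lang_def cat_simps by blast
  from runD[OF r assms refl ext_empty[symmetric]] show "w \<in> {u @ v | u v. u \<in> safa_lang M1 \<and> v \<in> safa_lang M2}"
  proof
    assume "\<exists>q'. p = Inl q' \<and> safa_run M1 (sa_init M1) (\<lambda>_. {}) w q'"
    then obtain q' where "p = Inl q'" "safa_run M1 (sa_init M1) (\<lambda>_. {}) w q'" by blast
    moreover have "q' \<in> sa_final M1" "sa_init M2 \<in> sa_final M2"
      using p calculation(1) unfolding cat_simps by (auto split: if_splits)
    ultimately show ?thesis unfolding safa_lang_def
      by (smt (verit, del_insts) append.right_neutral mem_Collect_eq safa_run.nil)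
  next
    assume "\<exists>u v f g. w = u @ v \<and> safa_run M1 (sa_init M1) (\<lambda>_. {}) u f \<and> f \<in> sa_final M1 \<and> p = Inr g
        \<and> safa_run M2 (sa_init M2) (\<lambda>_. {}) v g"
    then obtain u v f g where "w = u @ v" "safa_run M1 (sa_init M1) (\<lambda>_. {}) u f" "f \<in> sa_final M1" "p = Inr g"
        "safa_run M2 (sa_init M2) (\<lambda>_. {}) v g" by blast
    moreover have "g \<in> sa_final M2" using p calculation(4) unfolding cat_simps by (auto split: if_splits)
    ultimately show ?thesis unfolding safa_lang_def by blast
  qed
next
  fix w :: "('a \<times> 'd) list"
  assume "w \<in> {u @ v | u v. u \<in> safa_lang M1 \<and> v \<in> safa_lang M2}"
  then obtain u v f g where w: "w = u @ v" and r1: "safa_run M1 (sa_init M1) (\<lambda>_. {}) u f" and f: "f \<in> sa_final M1"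
    and r2: "safa_run M2 (sa_init M2) (\<lambda>_. {}) v g" and g: "g \<in> sa_final M2"
    unfolding safa_lang_def by blast
  show "w \<in> safa_lang (cat M1 M2)"
  proof (cases v)
    case Nil
    with r2 have "g = sa_init M2" by (auto elim: safa_run.cases)
    have "safa_run (cat M1 M2) (Inl (sa_init M1)) (extS (sa_nsets M1) (\<lambda>_. {})) (u @ []) (Inl f)"
      by (rule runB[OF r1 assms]) (rule safa_run.nil)
    then show ?thesis using w Nil g f \<open>g = sa_init M2\<close> unfolding safa_lang_def cat_simps ext_empty
      by auto
  next
    case (Cons x v')
    then obtain a d where v: "v = (a,d) # v'" by (cases x) auto
    have "safa_run (cat M1 M2) (Inl (sa_init M1)) (extS (sa_nsets M1) (\<lambda>_. {})) (u @ v) (Inr g)"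
      by (rule runB[OF r1 assms]) (use runC[OF f r2[unfolded v]] v in simp)
    then show ?thesis using w g unfolding safa_lang_def cat_simps ext_empty by auto
  qed
qed

lemma cat_wf:
  assumes w1: "wf_safa M1" and w2: "wf_safa M2"
  shows "wf_safa (cat M1 M2)"
proof -
  have c: "cond_idx (shc k c) = cond_idx c + k" for k c by (cases c) auto
  have o: "op_ok m opr \<Longrightarrow> op_ok (k + m) (shop k opr)" for m k opr by (cases opr) auto
  have o1: "op_ok m opr \<Longrightarrow> op_ok (m + k) opr" for m k opr by (cases opr) auto
  have T: "x \<in> sa_states (cat M1 M2) \<and> y \<in> sa_states (cat M1 M2)
     \<and> cond_idx cc < sa_nsets (cat M1 M2) \<and> op_ok (sa_nsets (cat M1 M2)) opr"
    if "(x, a, cc, opr, y) \<in> sa_trans (cat M1 M2)" for x a cc opr y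
    using that unfolding trans_cat
  proof (elim disjE exE conjE)
    fix q q' assume "x = Inl q" "y = Inl q'" "(q, a, cc, opr, q') \<in> sa_trans M1"
    then show ?thesis using w1 o1 unfolding wf_safa_def cat_simps by fastforce
  next
    fix q q' c0 o0 assume "x = Inr q" "y = Inr q'" "cc = shc (sa_nsets M1) c0"
      "opr = shop (sa_nsets M1) o0" "(q, a, c0, o0, q') \<in> sa_trans M2"
    moreover have "q \<in> sa_states M2 \<and> q' \<in> sa_states M2 \<and> cond_idx c0 < sa_nsets M2 \<and> op_ok (sa_nsets M2) o0"
      using w2 calculation(5) unfolding wf_safa_def by fast
    ultimately show ?thesis unfolding cat_simps by (simp add: c o)
  next
    fix f q' c0 o0 assume "x = Inl f" "y = Inr q'" "cc = shc (sa_nsets M1) c0"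
      "opr = shop (sa_nsets M1) o0" "f \<in> sa_final M1" "(sa_init M2, a, c0, o0, q') \<in> sa_trans M2"
    moreover have "q' \<in> sa_states M2 \<and> cond_idx c0 < sa_nsets M2 \<and> op_ok (sa_nsets M2) o0"
      using w2 calculation(6) unfolding wf_safa_def by fast
    moreover have "f \<in> sa_states M1" using w1 calculation(5) unfolding wf_safa_def by blast
    ultimately show ?thesis unfolding cat_simps by (simp add: c o)
  qed
  have "finite (sa_states (cat M1 M2))" "sa_init (cat M1 M2) \<in> sa_states (cat M1 M2)"
    "sa_final (cat M1 M2) \<subseteq> sa_states (cat M1 M2)"
    using w1 w2 unfolding wf_safa_def cat_simps by auto
  then show ?thesis using T unfolding wf_safa_def by blast
qed

definition ren :: "('q \<Rightarrow> 'p) \<Rightarrow> ('q,'a) safa \<Rightarrow> ('p,'a) safa" where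
"ren f M = \<lparr>sa_states = f ` sa_states M, sa_init = f (sa_init M), sa_final = f ` sa_final M,
   sa_nsets = sa_nsets M,
   sa_trans = (\<lambda>(q,a,c,opr,q'). (f q, a, c, opr, f q')) ` sa_trans M\<rparr>"

lemma ren_simps:
  "sa_states (ren f M) = f ` sa_states M" "sa_init (ren f M) = f (sa_init M)"
  "sa_final (ren f M) = f ` sa_final M" "sa_nsets (ren f M) = sa_nsets M"
  by (simp_all add: ren_def)

lemma trans_ren: "(x, a, c, opr, y) \<in> sa_trans (ren f M) \<longleftrightarrow>
   (\<exists>q q'. x = f q \<and> y = f q' \<and> (q,a,c,opr,q') \<in> sa_trans M)"
  unfolding ren_def by (simp add: image_iff Bex_def) fastforce

lemma ren_fwd: "safa_run M q S w q'' \<Longrightarrow> safa_run (ren f M) (f q) S w (f q'')"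
proof (induction rule: safa_run.induct)
  case (nil q S)
  then show ?case by (rule safa_run.nil)
next
  case (cons q a c opr q' S d w q'')
  show ?case
    by (rule safa_run.cons[OF _ cons(2) cons.IH]) (unfold trans_ren, use cons(1) in blast)
qed

lemma ren_bwd: "safa_run (ren f M) x S w p \<Longrightarrow> wf_safa M \<Longrightarrow> inj_on f (sa_states M) \<Longrightarrow>
   x = f q \<Longrightarrow> q \<in> sa_states M \<Longrightarrow> \<exists>q''. p = f q'' \<and> q'' \<in> sa_states M \<and> safa_run M q S w q''"
proof (induction arbitrary: q rule: safa_run.induct)
  case (nil q S)
  then show ?case by (auto intro: safa_run.nil)
next
  case (cons x a c opr y S d w p)
  from cons(1) obtain q1 q1' where e: "x = f q1" "y = f q1'" and t: "(q1,a,c,opr,q1') \<in> sa_trans M"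
    unfolding trans_ren by blast
  have "q1 \<in> sa_states M" "q1' \<in> sa_states M" using t cons(5) unfolding wf_safa_def by auto
  moreover have "f q1 = f q" using e(1) cons(7) by simp
  ultimately have "q1 = q" using inj_onD[OF cons(6)] cons(8) by blast
  from cons.IH[OF cons(5,6) e(2) \<open>q1' \<in> sa_states M\<close>] obtain q'' where
    "p = f q''" "q'' \<in> sa_states M" "safa_run M q1' (apply_op opr d S) w q''" by blast
  then show ?case using safa_run.cons[OF t cons(2)] \<open>q1 = q\<close> by blast
qed

lemma ren_lang:
  fixes M :: "('q, 'a) safa" and f :: "'q \<Rightarrow> 'p"
  assumes wfM: "wf_safa M" and inj: "inj_on f (sa_states M)"
  shows "safa_lang (ren f M) = safa_lang M"
proof (intro set_eqI iffI)
  fix w :: "('a \<times> 'd) list"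
  assume "w \<in> safa_lang (ren f M)"
  then obtain p where r: "safa_run (ren f M) (f (sa_init M)) (\<lambda>_. {}) w p" and p: "p \<in> f ` sa_final M"
    unfolding safa_lang_def ren_simps by blast
  have i: "sa_init M \<in> sa_states M" using wfM unfolding wf_safa_def by blast
  from ren_bwd[OF r wfM inj refl i] obtain q'' where A: "p = f q''" and B: "q'' \<in> sa_states M"
    and C: "safa_run M (sa_init M) (\<lambda>_. {}) w q''" by blast
  obtain q0 where q0: "q0 \<in> sa_final M" "p = f q0" using p by blast
  have q0s: "q0 \<in> sa_states M" using q0(1) wfM unfolding wf_safa_def by blast
  have "f q0 = f q''" using q0(2) A by simp
  then have "q0 = q''" using inj_onD[OF inj] q0s B by blast
  then have fin: "q'' \<in> sa_final M" using q0 by simp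
  show "w \<in> safa_lang M" unfolding safa_lang_def
    by (rule CollectI, rule exI[of _ q''], rule conjI[OF C fin])
next
  fix w :: "('a \<times> 'd) list"
  assume "w \<in> safa_lang M"
  then obtain q where r: "safa_run M (sa_init M) (\<lambda>_. {}) w q" and fq: "q \<in> sa_final M"
    unfolding safa_lang_def by blast
  have "safa_run (ren f M) (f (sa_init M)) (\<lambda>_. {}) w (f q)" by (rule ren_fwd[OF r])
  moreover have "f q \<in> f ` sa_final M" using fq by (rule imageI)
  ultimately show "w \<in> safa_lang (ren f M)" unfolding safa_lang_def ren_simps
    by (intro CollectI exI[of _ "f q"] conjI)
qed

lemma ren_wf:
  assumes wfM: "wf_safa M" shows "wf_safa (ren f M)"
proof -
  have T: "x \<in> sa_states (ren f M) \<and> y \<in> sa_states (ren f M)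
     \<and> cond_idx cc < sa_nsets (ren f M) \<and> op_ok (sa_nsets (ren f M)) opr"
    if tr: "(x, a, cc, opr, y) \<in> sa_trans (ren f M)" for x a cc opr y
  proof -
    obtain q q' where e: "x = f q" "y = f q'" and t: "(q,a,cc,opr,q') \<in> sa_trans M"
      using tr unfolding trans_ren by blast
    have "q \<in> sa_states M \<and> q' \<in> sa_states M \<and> cond_idx cc < sa_nsets M \<and> op_ok (sa_nsets M) opr"
      using wfM t unfolding wf_safa_def by fast
    then show ?thesis unfolding ren_simps e by blast
  qed
  have "finite (sa_states (ren f M))" "sa_init (ren f M) \<in> sa_states (ren f M)"
    "sa_final (ren f M) \<subseteq> sa_states (ren f M)"
    using wfM unfolding wf_safa_def ren_simps by auto
  then show ?thesis using T unfolding wf_safa_def by blast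
qed

theorem theorem6:
  fixes M1 :: "('q1, 'a::finite) safa" and M2 :: "('q2, 'a) safa"
  assumes "infinite (UNIV :: ('d::countable) set)"
    and "wf_safa M1" and "wf_safa M2"
  shows "\<exists>M :: (nat, 'a) safa. wf_safa M \<and>
           safa_lang M = {u @ v | u v. u \<in> (safa_lang M1 :: ('a \<times> 'd) list set) \<and> v \<in> safa_lang M2}"
proof -
  let ?C = "cat M1 M2"
  let ?f = "to_nat_on (sa_states ?C)"
  have wf: "wf_safa ?C" using cat_wf assms(2,3) by blast
  then have "countable (sa_states ?C)" unfolding wf_safa_def by (simp add: countable_finite)
  then have inj: "inj_on ?f (sa_states ?C)" by (rule inj_on_to_nat_on)
  have L: "(safa_lang (ren ?f ?C) :: ('a \<times> 'd) list set) = safa_lang ?C"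
    by (rule ren_lang[OF wf inj])
  have L2: "(safa_lang ?C :: ('a \<times> 'd) list set) = {u @ v | u v. u \<in> (safa_lang M1 :: ('a \<times> 'd) list set) \<and> v \<in> safa_lang M2}"
    by (rule cat_lang[OF assms(2)])
  have W: "wf_safa (ren ?f ?C)" by (rule ren_wf[OF wf])
  show ?thesis
    by (rule exI[of _ "ren ?f ?C"]) (simp only: W L L2)
qed

end
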